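(* Let $\phi$ be an instance of \textsc{Max (2,3)-SAT} with $n$ variables and let $T_\phi$ be the tournament instance constructed from $\phi$ as described in the context. If $\phi$ admits an assignment that satisfies at least $k$ clauses, then $T_\phi$ has a seeding whose tournament value is at least $k+n$.
   Context: Tournament model: players form a finite set of size $2^{n'}$ totally ordered by strength (stronger beats weaker). A seeding is a bijection $\sigma$ from players to $[2^{n'}]$. In round $r=1,\dots,n'$, for each block of seed positions $\{(k-1)2^r+1,\dots,k2^r\}$, the winner $a$ of its first half $\{(k-1)2^r+1,\dots,(k-1)2^r+2^{r-1}\}$ plays the winner $b$ of its second half (a single-position block is won by the player seeded there), the stronger one wins the block, and the game has value $v(a,b,r)$. The tournament value is the sum of values of all games played. \textsc{Max (2,3)-SAT} instance: a CNF formula $\phi$ with variables $x_1,\dots,x_n$ and clauses $c_1,\dots,c_m$, each clause having exactly two literals and each variable appearing in at most three clauses; the occurrences of each variable $x$ as a literal are numbered $1,2,3$ (its $j$th appearance) in a fixed order. Construction of $T_\phi$: let $n'$ be the smallest integer with $16n\le 2^{n'}$ and $p=2^{n'}-16n$. Players: for each variable $x$, three variable players $x,x^T,x^F$; for each clause $c$, one clause player $c$; and dummy players $f_1,\dots,f_{13n+p-m}$. Strength order (strongest first): $x_1>x_1^T>x_1^F>x_2>x_2^T>x_2^F>\dots>x_n>x_n^T>x_n^F>c_1>\dots>c_m>f_1>\dots>f_{13n+p-m}$. Game values: for each variable $x$, $v(x,x^T,1)=v(x^T,x,1)=v(x,x^F,1)=v(x^F,x,1)=1$; for each clause $c$ and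 each literal of $c$ that is the $j$th appearance of variable $x$, if $x$ appears non-negated there set $v(c,x^T,j)=v(x^T,c,j)=1$, and otherwise set $v(c,x^F,j)=v(x^F,c,j)=1$; all other values $v(a,b,r)$ for $r\in[n']$ are $0$. *)

theory Defs
  imports Main
begin

definition stronger :: "('p \<Rightarrow> nat) \<Rightarrow> 'p \<Rightarrow> 'p \<Rightarrow> 'p" where
  "stronger rank a b = (if rank a < rank b then a else b)"

definition is_seeding :: "'p set \<Rightarrow> nat \<Rightarrow> ('p \<Rightarrow> nat) \<Rightarrow> bool" where
  "is_seeding P N \<sigma> \<longleftrightarrow> bij_betw \<sigma> P {1..2^N}"

text \<open>winner P rank sigma r k: winner of the block of seed positions
  {(k-1)2^r+1 .. k 2^r} (k >= 1).\<close>

fun winner :: "'p set \<Rightarrow> ('p \<Rightarrow> nat) \<Rightarrow> ('p \<Rightarrow> nat) \<Rightarrow> nat \<Rightarrow> nat \<Rightarrow> 'p" where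
  "winner P rank \<sigma> 0 k = inv_into P \<sigma> k"
| "winner P rank \<sigma> (Suc r) k =
     stronger rank (winner P rank \<sigma> r (2*k - 1)) (winner P rank \<sigma> r (2*k))"

definition tournament_value ::
  "'p set \<Rightarrow> nat \<Rightarrow> ('p \<Rightarrow> nat) \<Rightarrow> ('p \<Rightarrow> 'p \<Rightarrow> nat \<Rightarrow> nat) \<Rightarrow> ('p \<Rightarrow> nat) \<Rightarrow> nat" where
  "tournament_value P N rank v \<sigma> =
     (\<Sum>r\<in>{1..N}. \<Sum>k\<in>{1..2^(N-r)}.
        v (winner P rank \<sigma> (r-1) (2*k-1)) (winner P rank \<sigma> (r-1) (2*k)) r)"

text \<open>Variables are 0..n-1.  A literal is (variable, positive?, occurrence number j);
  a clause is a pair of literals; a formula is a list of clauses.\<close>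

type_synonym lit = "nat \<times> bool \<times> nat"
type_synonym clause = "lit \<times> lit"

definition lit_var :: "lit \<Rightarrow> nat" where "lit_var l = fst l"
definition lit_pos :: "lit \<Rightarrow> bool" where "lit_pos l = fst (snd l)"
definition lit_occ :: "lit \<Rightarrow> nat" where "lit_occ l = snd (snd l)"

definition clause_lit :: "clause \<Rightarrow> nat \<Rightarrow> lit" where
  "clause_lit c i = (if i = 0 then fst c else snd c)"

text \<open>Well-formed instance: every literal uses a variable < n with occurrence number in
  {1,2,3}, and the occurrence numbers of each variable are distinct across all literal
  positions (so each variable occurs at most three times, numbered 1,2,3 in a fixed order).\<close>

definition wf_23sat :: "nat \<Rightarrow> clause list \<Rightarrow> bool" where
  "wf_23sat n cls \<longleftrightarrow>
     (\<forall>c<length cls. \<forall>i<2. lit_var (clause_lit (cls!c) i) < n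
                        \<and> lit_occ (clause_lit (cls!c) i) \<in> {1,2,3}) \<and>
     (\<forall>c<length cls. \<forall>i<2. \<forall>c'<length cls. \<forall>i'<2.
        lit_var (clause_lit (cls!c) i) = lit_var (clause_lit (cls!c') i') \<and>
        lit_occ (clause_lit (cls!c) i) = lit_occ (clause_lit (cls!c') i')
        \<longrightarrow> c = c' \<and> i = i')"

definition lit_sat :: "(nat \<Rightarrow> bool) \<Rightarrow> lit \<Rightarrow> bool" where
  "lit_sat a l \<longleftrightarrow> a (lit_var l) = lit_pos l"

definition num_sat :: "(nat \<Rightarrow> bool) \<Rightarrow> clause list \<Rightarrow> nat" where
  "num_sat a cls = card {c. c < length cls \<and>
       (lit_sat a (clause_lit (cls!c) 0) \<or> lit_sat a (clause_lit (cls!c) 1))}"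

datatype player = VarP nat | VarT nat | VarF nat | ClP nat | Dummy nat

definition nprime :: "nat \<Rightarrow> nat" where
  "nprime n = (LEAST n'. 16 * n \<le> 2 ^ n')"

definition padp :: "nat \<Rightarrow> nat" where
  "padp n = 2 ^ nprime n - 16 * n"

definition T_players :: "nat \<Rightarrow> clause list \<Rightarrow> player set" where
  "T_players n cls =
     VarP ` {..<n} \<union> VarT ` {..<n} \<union> VarF ` {..<n} \<union> ClP ` {..<length cls}
     \<union> Dummy ` {..<13 * n + padp n - length cls}"

fun T_rank :: "nat \<Rightarrow> clause list \<Rightarrow> player \<Rightarrow> nat" where
  "T_rank n cls (VarP i) = 3 * i"
| "T_rank n cls (VarT i) = 3 * i + 1"
| "T_rank n cls (VarF i) = 3 * i + 2"
| "T_rank n cls (ClP j) = 3 * n + j"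
| "T_rank n cls (Dummy l) = 3 * n + length cls + l"

definition T_edge :: "clause list \<Rightarrow> player \<Rightarrow> player \<Rightarrow> nat \<Rightarrow> bool" where
  "T_edge cls a b r \<longleftrightarrow>
     (\<exists>x. r = 1 \<and> a = VarP x \<and> (b = VarT x \<or> b = VarF x)) \<or>
     (\<exists>c<length cls. \<exists>i<2. a = ClP c \<and>
        r = lit_occ (clause_lit (cls!c) i) \<and>
        b = (if lit_pos (clause_lit (cls!c) i) then VarT (lit_var (clause_lit (cls!c) i))
             else VarF (lit_var (clause_lit (cls!c) i))))"

definition T_value :: "clause list \<Rightarrow> player \<Rightarrow> player \<Rightarrow> nat \<Rightarrow> nat" where
  "T_value cls a b r = (if T_edge cls a b r \<or> T_edge cls b a r then 1 else 0)"

end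

theory Submission
  imports Defs
begin

definition blk :: "nat \<Rightarrow> nat \<Rightarrow> nat set" where
  "blk r k = {(k-1)*2^r+1 .. k*2^r}"

lemma blk_Suc:
  assumes "1 \<le> k"
  shows "blk (Suc r) k = blk r (2*k-1) \<union> blk r (2*k)"
proof -
  define q :: nat where "q = 2^r"
  have e1: "(k-1)*2^Suc r = (2*k-2)*q" and e2: "k*2^Suc r = (2*k)*q"
    using assms by (simp_all add: q_def algebra_simps)
  have e3: "2*k-1-1 = 2*k-2" by arith
  have "(2*k-2)*q \<le> (2*k-1)*q" "(2*k-1)*q \<le> (2*k)*q" by (intro mult_le_mono1; arith)+
  moreover have "\<And>A B C::nat. A \<le> B \<Longrightarrow> B \<le> C \<Longrightarrow> {A+1..C} = {A+1..B} \<union> {B+1..C}" by auto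
  ultimately show ?thesis unfolding blk_def e1 e2 q_def[symmetric] e3
    by blast
qed

lemma winner_min:
  assumes bij: "bij_betw \<sigma> P {1..2^N}"
  shows "1 \<le> k \<Longrightarrow> k*2^r \<le> 2^N \<Longrightarrow> winner P rank \<sigma> r k \<in> P \<and> \<sigma> (winner P rank \<sigma> r k) \<in> blk r k
     \<and> (\<forall>p\<in>P. \<sigma> p \<in> blk r k \<longrightarrow> rank (winner P rank \<sigma> r k) \<le> rank p)"
proof (induction r arbitrary: k)
  case 0
  then have kin: "k \<in> \<sigma> ` P" using bij by (auto simp: bij_betw_def)
  have inj: "inj_on \<sigma> P" using bij by (auto simp: bij_betw_def)
  have b0: "blk 0 k = {k}" using 0 by (auto simp: blk_def)
  show ?case unfolding b0 using kin inj
    by (auto simp: inv_into_into f_inv_into_f dest: inj_onD)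
next
  case (Suc r)
  have h1: "1 \<le> 2*k-1" "(2*k-1)*2^r \<le> 2^N" using Suc.prems
    by (auto simp: algebra_simps)
  have h2: "1 \<le> 2*k" "(2*k)*2^r \<le> 2^N" using Suc.prems by (auto simp: algebra_simps)
  note A = Suc.IH[OF h1] and B = Suc.IH[OF h2]
  show ?case unfolding winner.simps blk_Suc[OF Suc.prems(1)] stronger_def
    using A B by auto
qed

lemma winner_is:
  assumes bij: "bij_betw \<sigma> P {1..2^N}" and "1 \<le> k" "k*2^r \<le> 2^N"
    and "q \<in> P" "\<sigma> q \<in> blk r k" and "\<forall>p\<in>P. \<sigma> p \<in> blk r k \<longrightarrow> p = q \<or> rank q < rank p"
  shows "winner P rank \<sigma> r k = q"
  using winner_min[OF bij assms(2,3)] assms(4-) by force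


lemma arith16:
  fixes x x' s s' u u' :: nat
  assumes "16*x + s + u = 16*x' + s' + u'" "s = 0 \<or> s = 8" "s' = 0 \<or> s' = 8" "u < 8" "u' < 8"
  shows "x = x' \<and> s = s' \<and> u = u'"
proof -
  have "\<not> x < x'"
  proof
    assume "x < x'" then have "x + 1 \<le> x'" by simp
    then show False using assms by linarith
  qed
  moreover have "\<not> x' < x"
  proof
    assume "x' < x" then have "x' + 1 \<le> x" by simp
    then show False using assms by linarith
  qed
  ultimately have "x = x'" by simp
  then show ?thesis using assms by auto
qed

locale cons =
  fixes n :: nat and cls :: "clause list" and a :: "nat \<Rightarrow> bool"
  assumes wf: "wf_23sat n cls"
begin

definition ci :: "nat \<Rightarrow> nat" where
  "ci c = (if lit_sat a (clause_lit (cls!c) 0) then 0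
           else if lit_sat a (clause_lit (cls!c) 1) then 1 else 0)"
definition cl where "cl c = clause_lit (cls!c) (ci c)"
definition cx where "cx c = lit_var (cl c)"
definition cj where "cj c = lit_occ (cl c)"
definition cb where "cb c = lit_pos (cl c)"
definition sd :: "bool \<Rightarrow> nat" where "sd b = (if b then 0 else 8)"
definition co :: "nat \<Rightarrow> nat" where
  "co c = (if cj c = 1 then (if a (cx c) = cb c then 1 else 3) else if cj c = 2 then 2 else 4)"

fun pos :: "player \<Rightarrow> nat" where
  "pos (VarP y) = 16*y + sd (\<not> a y) + 1 + 1"
| "pos (VarT y) = 16*y + 0 + 0 + 1"
| "pos (VarF y) = 16*y + 8 + 0 + 1"
| "pos (ClP c) = 16 * cx c + sd (cb c) + co c + 1"
| "pos (Dummy l) = 0"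

definition ND where
  "ND = VarP ` {..<n} \<union> VarT ` {..<n} \<union> VarF ` {..<n} \<union> ClP ` {..<length cls}"
definition D where "D = Dummy ` {..<13 * n + padp n - length cls}"

lemma P_eq: "T_players n cls = ND \<union> D"
  by (auto simp: T_players_def ND_def D_def)

lemma ci_lt: "ci c < 2" by (simp add: ci_def)

lemma cl_facts: "c < length cls \<Longrightarrow> cx c < n \<and> cj c \<in> {1,2,3}"
  using wf ci_lt[of c] unfolding wf_23sat_def cx_def cj_def cl_def by blast

lemma cl_inj: "c < length cls \<Longrightarrow> c' < length cls \<Longrightarrow> cx c = cx c' \<Longrightarrow> cj c = cj c' \<Longrightarrow> c = c'"
  using wf ci_lt[of c] ci_lt[of c'] unfolding wf_23sat_def cx_def cj_def cl_def by blast

lemma sd_cases: "sd b = 0 \<or> sd b = 8" by (simp add: sd_def)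
lemma co_lt: "co c < 8" "co c \<ge> 1" by (auto simp: co_def)

lemma co_inj: "c < length cls \<Longrightarrow> c' < length cls \<Longrightarrow> cx c = cx c' \<Longrightarrow> cb c = cb c' \<Longrightarrow> co c = co c' \<Longrightarrow> c = c'"
  using cl_facts[of c] cl_facts[of c'] cl_inj[of c c'] unfolding co_def
  by (auto split: if_splits)

fun pX where "pX (VarP y) = y" | "pX (VarT y) = y" | "pX (VarF y) = y" | "pX (ClP c) = cx c" | "pX (Dummy l) = 0"
fun pS where "pS (VarP y) = sd (\<not> a y)" | "pS (VarT y) = 0" | "pS (VarF y) = 8" | "pS (ClP c) = sd (cb c)" | "pS (Dummy l) = 0"
fun pO where "pO (VarP y) = 1" | "pO (VarT y) = 0" | "pO (VarF y) = 0" | "pO (ClP c) = co c" | "pO (Dummy l) = 0"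

lemma pos_dec: "p \<in> ND \<Longrightarrow> pos p = 16 * pX p + pS p + pO p + 1 \<and> (pS p = 0 \<or> pS p = 8) \<and> pO p < 8"
  using sd_cases co_lt by (auto simp: ND_def) (metis sd_cases)+

lemma co1: "co c = 1 \<Longrightarrow> a (cx c) = cb c"
  unfolding co_def by (cases "cj c = 1"; cases "a (cx c) = cb c"; cases "cj c = 2"; simp)

lemma co0: "co c \<noteq> 0" using co_lt(2)[of c] by simp

lemma sd_eq[simp]: "sd b = sd b' \<longleftrightarrow> b = b'" by (simp add: sd_def)

lemma vpc: "Suc 0 = co c \<Longrightarrow> (\<not> a (cx c)) = cb c \<Longrightarrow> False"
  using co1[of c] by simp
lemma vpc': "co c = Suc 0 \<Longrightarrow> cb c = (\<not> a (cx c)) \<Longrightarrow> False"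
  using co1[of c] by simp

lemma pos_inj: "inj_on pos ND"
proof
  fix p q assume p: "p \<in> ND" and q: "q \<in> ND" and e: "pos p = pos q"
  have "pX p = pX q \<and> pS p = pS q \<and> pO p = pO q"
    using pos_dec[OF p] pos_dec[OF q] e arith16[of "pX p" "pS p" "pO p" "pX q" "pS q" "pO q"] by auto
  then show "p = q" using p q
  proof (cases p; cases q)
  qed (auto simp: ND_def co0 dest: vpc vpc' intro: co_inj)
qed

end

context cons begin

abbreviation "N \<equiv> nprime n"
abbreviation "m \<equiv> length cls"
abbreviation "PP \<equiv> T_players n cls"
abbreviation "rk \<equiv> T_rank n cls"

lemma N16: "16 * n \<le> 2 ^ N"
proof -
  have "16 * n \<le> 2 ^ (4 + n)" using less_exp[of n] by (simp add: power_add)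
  then show ?thesis unfolding nprime_def by (rule LeastI)
qed

lemma pX_lt: "p \<in> ND \<Longrightarrow> pX p < n"
  using cl_facts by (auto simp: ND_def)

lemma pos_range: "p \<in> ND \<Longrightarrow> 1 \<le> pos p \<and> pos p \<le> 16 * n"
proof -
  assume p: "p \<in> ND"
  note d = pos_dec[OF p] and x = pX_lt[OF p]
  have "pX p + 1 \<le> n" using x by simp
  then have "16 * (pX p + 1) \<le> 16 * n" by simp
  then show ?thesis using d by auto
qed

lemma card_ND: "card ND = 3 * n + m"
proof -
  have "card ND = card (VarP ` {..<n}) + card (VarT ` {..<n}) + card (VarF ` {..<n}) + card (ClP ` {..<m})"
    unfolding ND_def
    by (subst card_Un_disjoint, auto)+
  also have "\<dots> = 3 * n + m" by (simp add: card_image inj_on_def)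
  finally show ?thesis .
qed

lemma card_D: "card D = 13 * n + padp n - m"
  by (simp add: D_def card_image inj_on_def)

lemma ND_D: "ND \<inter> D = {}" by (auto simp: ND_def D_def)

lemma fin: "finite ND" "finite D" by (auto simp: ND_def D_def)

definition F where "F = {1..2^N} - pos ` ND"

lemma posND_sub: "pos ` ND \<subseteq> {1..2^N}" using pos_range N16 by fastforce

lemma card_F: "card F = card D"
proof -
  have "card F = 2^N - card (pos ` ND)" unfolding F_def
    using posND_sub by (simp add: card_Diff_subset fin)
  also have "\<dots> = 2^N - (3*n+m)" using card_ND pos_inj by (simp add: card_image)
  finally show ?thesis using card_D N16 unfolding padp_def by simp
qed

lemma exists_sigma: "\<exists>\<sigma>. bij_betw \<sigma> PP {1..2^N} \<and> (\<forall>p\<in>ND. \<sigma> p = pos p)"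
proof -
  obtain g where g: "bij_betw g D F"
    using finite_same_card_bij[of D F] card_F fin by (auto simp: F_def)
  define \<sigma> where "\<sigma> p = (if p \<in> D then g p else pos p)" for p
  have b1: "bij_betw \<sigma> ND (pos ` ND)"
    using pos_inj ND_D unfolding bij_betw_def \<sigma>_def inj_on_def by auto
  have b2: "bij_betw \<sigma> D F"
    using g by (rule bij_betw_cong[THEN iffD1, rotated]) (simp add: \<sigma>_def)
  have "bij_betw \<sigma> (ND \<union> D) (pos ` ND \<union> F)"
    by (rule bij_betw_combine[OF b1 b2]) (auto simp: F_def)
  moreover have "pos ` ND \<union> F = {1..2^N}" using posND_sub by (auto simp: F_def)
  ultimately have "bij_betw \<sigma> PP {1..2^N}" by (simp add: P_eq)
  moreover have "\<forall>p\<in>ND. \<sigma> p = pos p" using ND_D by (auto simp: \<sigma>_def)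
  ultimately show ?thesis by blast
qed

lemma rank_D: "p \<in> D \<Longrightarrow> 3*n+m \<le> rk p" by (auto simp: D_def)
lemma rank_ND: "p \<in> ND \<Longrightarrow> rk p < 3*n+m" by (auto simp: ND_def)

lemma winner_nd:
  assumes bij: "bij_betw \<sigma> PP {1..2^N}" and sp: "\<forall>p\<in>ND. \<sigma> p = pos p"
    and "1 \<le> k" "k*2^r \<le> 2^N" and q: "q \<in> ND" "pos q \<in> blk r k"
    and oth: "\<forall>p\<in>ND. pos p \<in> blk r k \<longrightarrow> p = q \<or> rk q < rk p"
  shows "winner PP rk \<sigma> r k = q"
proof (rule winner_is[OF bij assms(3,4)])
  show "q \<in> PP" using q by (simp add: P_eq)
  show "\<sigma> q \<in> blk r k" using q sp by simp
  show "\<forall>p\<in>PP. \<sigma> p \<in> blk r k \<longrightarrow> p = q \<or> rk q < rk p"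
  proof (intro ballI impI)
    fix p assume p: "p \<in> PP" "\<sigma> p \<in> blk r k"
    show "p = q \<or> rk q < rk p"
    proof (cases "p \<in> ND")
      case True then show ?thesis using oth sp p by auto
    next
      case False then have "p \<in> D" using p by (simp add: P_eq)
      then show ?thesis using rank_D rank_ND[OF q(1)] by fastforce
    qed
  qed
qed

lemma arith_rng:
  fixes X S U x s lo hi :: nat
  assumes "16*x+s+lo+1 \<le> 16*X+S+U+1" "16*X+S+U+1 \<le> 16*x+s+hi"
    "S = 0 \<or> S = 8" "s = 0 \<or> s = 8" "U < 8" "hi \<le> 8"
  shows "X = x \<and> S = s \<and> lo \<le> U \<and> U < hi"
proof -
  define t where "t = 16*X+S+U - (16*x+s)"
  have t: "16*x+s+t = 16*X+S+U" "t < 8" using assms(1,2,6) unfolding t_def by linarith+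
  have "X = x \<and> S = s \<and> U = t" using arith16[OF t(1)[symmetric] assms(3,4,5) t(2)] by auto
  then show ?thesis using assms(1,2) t by linarith
qed

lemma pos_rng:
  assumes "p \<in> ND" "16*x+s+lo+1 \<le> pos p" "pos p \<le> 16*x+s+hi" "s = 0 \<or> s = 8" "hi \<le> 8"
  shows "pX p = x \<and> pS p = s \<and> lo \<le> pO p \<and> pO p < hi"
  using pos_dec[OF assms(1)] assms(2-) arith_rng[of x s lo "pX p" "pS p" "pO p" hi] by auto

lemma sat_cb: "c < m \<Longrightarrow> lit_sat a (cl c) \<Longrightarrow> a (cx c) = cb c"
  by (simp add: lit_sat_def cx_def cb_def)

lemma sat_h: "c < m \<Longrightarrow> lit_sat a (cl c) \<Longrightarrow>
   (cj c = 1 \<and> co c = 1) \<or> (cj c = 2 \<and> co c = 2) \<or> (cj c = 3 \<and> co c = 4)"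
  using cl_facts[of c] sat_cb[of c] by (auto simp: co_def)

lemma game_clause:
  assumes bij: "bij_betw \<sigma> PP {1..2^N}" and sp: "\<forall>p\<in>ND. \<sigma> p = pos p"
    and c: "c < m" and sat: "lit_sat a (cl c)"
  defines "x \<equiv> cx c" and "j \<equiv> cj c" and "s \<equiv> sd (cb c)" and "h \<equiv> co c"
  defines "kk \<equiv> (16*x+s) div (2*h) + 1"
  shows "j \<in> {1..N} \<and> kk \<in> {1..2^(N-j)} \<and>
    T_value cls (winner PP rk \<sigma> (j-1) (2*kk-1)) (winner PP rk \<sigma> (j-1) (2*kk)) j = 1"
proof -
  have x: "x < n" using cl_facts[OF c] by (simp add: x_def)
  have ab: "a x = cb c" using sat_cb[OF c sat] by (simp add: x_def)
  have hj: "(j = 1 \<and> h = 1) \<or> (j = 2 \<and> h = 2) \<or> (j = 3 \<and> h = 4)"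
    using sat_h[OF c sat] by (simp add: j_def h_def)
  have s01: "s = 0 \<or> s = 8" by (simp add: s_def sd_def)
  have e1: "(2*kk-1-1)*2^(j-1) = 16*x+s" and e2: "(2*kk-1)*2^(j-1) = 16*x+s+h"
    and e3: "(2*kk)*2^(j-1) = 16*x+s+2*h" and hpow: "2^(j-1) = h"
  proof -
    define q where "q = 2*x + s div 8"
    have q: "16*x+s = 8*q" using s01 by (auto simp: q_def)
    show "(2*kk-1-1)*2^(j-1) = 16*x+s" "(2*kk-1)*2^(j-1) = 16*x+s+h"
      "(2*kk)*2^(j-1) = 16*x+s+2*h" "2^(j-1) = h"
      using hj unfolding kk_def q by (auto simp: algebra_simps)
  qed
  have "16*x+16 \<le> 16*n" using x by simp
  then have top: "16*x+s+2*h \<le> 2^N" using N16 hj s01 by auto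
  have n1: "16 \<le> (2::nat)^N" using x N16 by linarith
  have jN: "j \<le> N"
  proof -
    have "(2::nat)^j \<le> 16" using hj by auto
    then have "(2::nat)^j \<le> 2^N" using n1 by linarith
    then show ?thesis by (rule power_le_imp_le_exp[of 2, rotated]) simp
  qed
  have kk1: "1 \<le> kk" by (simp add: kk_def)
  have "kk * 2^j = 16*x+s+2*h" using e3 hj by auto
  then have "kk * 2^j \<le> 2^(N-j) * 2^j" using top jN by (simp add: power_add[symmetric])
  then have kkN: "kk \<le> 2^(N-j)" by simp
  define L where "L = (if cb c then VarT x else VarF x)"
  have LND: "L \<in> ND" using x by (auto simp: L_def ND_def)
  have posL: "pos L = 16*x+s+1" by (simp add: L_def s_def sd_def)
  have w1: "winner PP rk \<sigma> (j-1) (2*kk-1) = L"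
  proof (rule winner_nd[OF bij sp])
    show "1 \<le> 2*kk-1" using kk1 by simp
    show "(2*kk-1)*2^(j-1) \<le> 2^N" using e2 top by simp
    show "L \<in> ND" by (rule LND)
    show "pos L \<in> blk (j-1) (2*kk-1)" unfolding blk_def e1 e2 posL using hj by auto
    show "\<forall>p\<in>ND. pos p \<in> blk (j-1) (2*kk-1) \<longrightarrow> p = L \<or> rk L < rk p"
    proof (intro ballI impI)
      fix p assume p: "p \<in> ND" "pos p \<in> blk (j - 1) (2 * kk - 1)"
      have r: "pX p = x \<and> pS p = s \<and> 0 \<le> pO p \<and> pO p < h"
        using p hj s01 unfolding blk_def e1 e2
        by (intro pos_rng[OF p(1), of x s 0 h]) auto
      show "p = L \<or> rk L < rk p"
        using p(1) r x ab by (auto simp: ND_def L_def s_def sd_def split: if_splits)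
    qed
  qed
  have w2: "winner PP rk \<sigma> (j-1) (2*kk) = ClP c"
  proof (rule winner_nd[OF bij sp])
    show "1 \<le> 2*kk" using kk1 by simp
    show "(2*kk)*2^(j-1) \<le> 2^N" using e3 top by simp
    show "ClP c \<in> ND" using c by (auto simp: ND_def)
    show "pos (ClP c) \<in> blk (j-1) (2*kk)" unfolding blk_def e2 e3 using hj
      by (auto simp: x_def s_def h_def)
    show "\<forall>p\<in>ND. pos p \<in> blk (j-1) (2*kk) \<longrightarrow> p = ClP c \<or> rk (ClP c) < rk p"
    proof (intro ballI impI)
      fix p assume p: "p \<in> ND" "pos p \<in> blk (j - 1) (2 * kk)"
      have e2': "2*kk-1 = 2*kk-1" ..
      have r: "pX p = x \<and> pS p = s \<and> h \<le> pO p \<and> pO p < 2*h"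
        using p hj s01 unfolding blk_def e2 e3
        by (intro pos_rng[OF p(1), of x s h "2*h"]) auto
      show "p = ClP c \<or> rk (ClP c) < rk p"
      proof (cases p)
        case (VarP y) then show ?thesis using r ab by (auto simp: s_def)
      next
        case (VarT y) then show ?thesis using r hj by auto
      next
        case (VarF y) then show ?thesis using r hj by auto
      next
        case (Dummy l) then show ?thesis using p by (auto simp: ND_def)
      next
        case (ClP c')
        have c': "c' < m" using p ClP by (auto simp: ND_def)
        have "cx c' = cx c" "cb c' = cb c" using r ClP by (auto simp: x_def s_def)
        moreover have "co c' = co c"
          using r ClP hj \<open>cx c' = cx c\<close> \<open>cb c' = cb c\<close> ab cl_facts[OF c']
          by (auto simp: co_def x_def h_def split: if_splits)
        ultimately have "c' = c" using co_inj[OF c' c] by simp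
        then show ?thesis using ClP by simp
      qed
    qed
  qed
  have "T_edge cls (ClP c) L j"
    unfolding T_edge_def using c ci_lt[of c]
    by (auto simp: L_def j_def x_def cj_def cx_def cb_def cl_def)
  then have "T_value cls L (ClP c) j = 1" by (simp add: T_value_def)
  then show ?thesis using w1 w2 kk1 kkN jN hj by auto
qed

lemma game_var:
  assumes bij: "bij_betw \<sigma> PP {1..2^N}" and sp: "\<forall>p\<in>ND. \<sigma> p = pos p"
    and y: "y < n"
  defines "kk \<equiv> (16*y + sd (\<not> a y)) div (2*1) + 1"
  shows "(1::nat) \<in> {1..N} \<and> kk \<in> {1..2^(N-1)} \<and>
    T_value cls (winner PP rk \<sigma> (1-1) (2*kk-1)) (winner PP rk \<sigma> (1-1) (2*kk)) 1 = 1"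
proof -
  define s where "s = sd (\<not> a y)"
  have s01: "s = 0 \<or> s = 8" by (simp add: s_def sd_def)
  have e1: "2*kk-1 = 16*y+s+1" and e2: "2*kk = 16*y+s+2"
    using s01 unfolding kk_def s_def[symmetric] by auto
  have "16*y+16 \<le> 16*n" using y by simp
  then have top: "16*y+s+2 \<le> 2^N" using N16 s01 by auto
  have n1: "16 \<le> (2::nat)^N" using y N16 by linarith
  have N1: "1 \<le> N" using n1 by (cases N) auto
  have kk1: "1 \<le> kk" by (simp add: kk_def)
  have "kk * 2 \<le> 2^(N-1) * 2" using top e2 N1 by (cases N) auto
  then have kkN: "kk \<le> 2^(N-1)" by simp
  define L where "L = (if a y then VarF y else VarT y)"
  have LND: "L \<in> ND" "VarP y \<in> ND" using y by (auto simp: L_def ND_def)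
  have posL: "pos L = 16*y+s+1" "pos (VarP y) = 16*y+s+2" by (auto simp: L_def s_def sd_def)
  have oth: "\<forall>p\<in>ND. pos p \<in> blk 0 k \<longrightarrow> p = q \<or> rk q < rk p" if "q \<in> ND" "pos q = k" for q k
    using pos_inj that pos_range[OF that(1)] unfolding blk_def by (auto dest: inj_onD)
  have k1: "2*kk-1 = pos L" and k2: "2*kk = pos (VarP y)" using e1 e2 posL by auto
  have w1: "winner PP rk \<sigma> 0 (2*kk-1) = L"
    unfolding k1
    by (rule winner_nd[OF bij sp _ _ LND(1) _ oth[OF LND(1) refl]]) (use k1 e1 top in \<open>auto simp: blk_def\<close>)
  have w2: "winner PP rk \<sigma> 0 (2*kk) = VarP y"
    unfolding k2
    by (rule winner_nd[OF bij sp _ _ LND(2) _ oth[OF LND(2) refl]]) (use k2 e2 top in \<open>auto simp: blk_def\<close>)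
  have "T_value cls L (VarP y) 1 = 1" by (auto simp: T_value_def T_edge_def L_def)
  then show ?thesis using w1 w2 kk1 kkN N1 by auto
qed

lemma divinj:
  fixes x x' s s' h :: nat
  assumes "h = 1 \<or> h = 2 \<or> h = 4" "s = 0 \<or> s = 8" "s' = 0 \<or> s' = 8"
    "(16*x+s) div (2*h) = (16*x'+s') div (2*h)"
  shows "x = x' \<and> s = s'"
proof -
  define q where "q = 2*x + s div 8"
  define q' where "q' = 2*x' + s' div 8"
  have q: "16*x+s = 8*q" "16*x'+s' = 8*q'" using assms(2,3) by (auto simp: q_def q'_def)
  have "q = q'" using assms(1,4) unfolding q by auto
  then have "16*x+s+0 = 16*x'+s'+0" using q by simp
  from arith16[OF this assms(2,3)] show ?thesis by simp
qed

lemma main: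
  assumes "k \<le> num_sat a cls"
  shows "\<exists>\<sigma>. is_seeding PP N \<sigma> \<and> k + n \<le> tournament_value PP N rk (T_value cls) \<sigma>"
proof -
  obtain \<sigma> where bij: "bij_betw \<sigma> PP {1..2^N}" and sp: "\<forall>p\<in>ND. \<sigma> p = pos p"
    using exists_sigma by blast
  define f where "f r k = T_value cls (winner PP rk \<sigma> (r-1) (2*k-1)) (winner PP rk \<sigma> (r-1) (2*k)) r" for r k
  define Sig where "Sig = Sigma {1..N} (\<lambda>r. {1..(2::nat)^(N-r)})"
  define SatC where "SatC = {c. c < m \<and> (lit_sat a (clause_lit (cls!c) 0) \<or> lit_sat a (clause_lit (cls!c) 1))}"
  define gv where "gv y = (1::nat, (16*y + sd (\<not> a y)) div (2*1) + 1)" for y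
  define gc where "gc c = (cj c, (16*cx c + sd (cb c)) div (2*co c) + 1)" for c
  define G where "G = gv ` {..<n} \<union> gc ` SatC"
  have satc: "c \<in> SatC \<Longrightarrow> c < m \<and> lit_sat a (cl c)" for c
    by (auto simp: SatC_def cl_def ci_def)
  have tv: "tournament_value PP N rk (T_value cls) \<sigma> = (\<Sum>(r,k)\<in>Sig. f r k)"
    unfolding tournament_value_def Sig_def f_def by (subst sum.Sigma) auto
  have Gv: "\<And>g. g \<in> G \<Longrightarrow> g \<in> Sig \<and> (case g of (r,k) \<Rightarrow> f r k) = 1"
  proof -
    fix g assume "g \<in> G"
    then consider (v) y where "y < n" "g = gv y" | (c) c where "c \<in> SatC" "g = gc c"
      unfolding G_def by blast
    then show "g \<in> Sig \<and> (case g of (r,k) \<Rightarrow> f r k) = 1"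
    proof cases
      case v then show ?thesis using game_var[OF bij sp v(1)]
        by (simp add: gv_def Sig_def f_def)
    next
      case c then show ?thesis using game_clause[OF bij sp satc[OF c(1), THEN conjunct1] satc[OF c(1), THEN conjunct2]]
        by (simp add: gc_def Sig_def f_def)
    qed
  qed
  have finSig: "finite Sig" by (simp add: Sig_def)
  have GS: "G \<subseteq> Sig" using Gv by blast
  have finG: "finite G" using finSig GS finite_subset by blast
  have "(\<Sum>g\<in>G. (case g of (r,k) \<Rightarrow> f r k)) = (\<Sum>g\<in>G. 1)"
    by (rule sum.cong) (use Gv in auto)
  then have "card G = (\<Sum>g\<in>G. (case g of (r,k) \<Rightarrow> f r k))" by simp
  also have "\<dots> \<le> (\<Sum>g\<in>Sig. (case g of (r,k) \<Rightarrow> f r k))"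
    by (rule sum_mono2[OF finSig GS]) simp
  finally have cG: "card G \<le> tournament_value PP N rk (T_value cls) \<sigma>" using tv by simp
  have hc: "c \<in> SatC \<Longrightarrow> (cj c = 1 \<and> co c = 1) \<or> (cj c = 2 \<and> co c = 2) \<or> (cj c = 3 \<and> co c = 4)" for c
    using sat_h satc by blast
  have injv: "inj_on gv {..<n}"
  proof (rule inj_onI)
    fix y y' assume "gv y = gv y'"
    then have "(16*y + sd (\<not> a y)) div (2*1) = (16*y' + sd (\<not> a y')) div (2*1)"
      by (simp add: gv_def)
    from divinj[OF _ sd_cases sd_cases this] show "y = y'" by simp
  qed
  have injc: "inj_on gc SatC"
  proof (rule inj_onI)
    fix c c' assume c: "c \<in> SatC" and c': "c' \<in> SatC" and e: "gc c = gc c'"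
    have j: "cj c = cj c'" using e by (simp add: gc_def)
    have h: "co c = co c'" using hc[OF c] hc[OF c'] j by auto
    have e': "(16*cx c + sd (cb c)) div (2*co c) = (16*cx c' + sd (cb c')) div (2*co c)"
      using e h by (simp add: gc_def)
    have hco: "co c = 1 \<or> co c = 2 \<or> co c = 4" using hc[OF c] by auto
    have "cx c = cx c' \<and> sd (cb c) = sd (cb c')"
      by (rule divinj[OF hco sd_cases sd_cases e'])
    then show "c = c'" using co_inj h satc[OF c] satc[OF c'] by auto
  qed
  have disj: "gv ` {..<n} \<inter> gc ` SatC = {}"
  proof (rule ccontr)
    assume "gv ` {..<n} \<inter> gc ` SatC \<noteq> {}"
    then obtain z where z: "z \<in> gv ` {..<n}" "z \<in> gc ` SatC" by blast
    then obtain y c where y: "y < n" and c: "c \<in> SatC" and e: "gv y = gc c" by auto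
    have h: "co c = 1" using e hc[OF c] by (auto simp: gv_def gc_def)
    have "snd (gv y) = snd (gc c)" using e by simp
    then have "(16*y + sd (\<not> a y)) div (2*1) + 1 = (16*cx c + sd (cb c)) div (2*co c) + 1"
      by (simp only: gv_def gc_def snd_conv)
    then have e': "(16*y + sd (\<not> a y)) div (2*1) = (16*cx c + sd (cb c)) div (2*1)"
      using h by simp
    have "y = cx c \<and> sd (\<not> a y) = sd (cb c)"
      by (rule divinj[OF _ sd_cases sd_cases e']) simp
    then show False using sat_cb satc[OF c] by auto
  qed
  have "card G = n + card SatC"
    unfolding G_def using disj injv injc
    by (subst card_Un_disjoint) (auto simp: card_image finite_subset[OF _ finite_Collect_less_nat] SatC_def)
  moreover have "card SatC = num_sat a cls" by (simp add: SatC_def num_sat_def)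
  ultimately show ?thesis using cG assms bij unfolding is_seeding_def by auto
qed

end

theorem lemma1:
  fixes n :: nat and cls :: "clause list" and a :: "nat \<Rightarrow> bool" and k :: nat
  assumes "wf_23sat n cls"
    and "k \<le> num_sat a cls"
  shows "\<exists>\<sigma>. is_seeding (T_players n cls) (nprime n) \<sigma> \<and>
           k + n \<le> tournament_value (T_players n cls) (nprime n) (T_rank n cls) (T_value cls) \<sigma>"
proof -
  interpret cons n cls a by unfold_locales (rule assms(1))
  show ?thesis by (rule main[OF assms(2)])
qed

end
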